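(* Let $C\subset \mathbb{C}P^2$ be the Klein quartic $\{(X:Y:Z): X^3Y+Y^3Z+Z^3X=0\}$, with affine coordinates $x=X^3Y^{-2}Z^{-1}+1$, $y=-XY^{-1}$, so that $y^7=x(1-x)^2$ on $C$. Let $\zeta_7=\exp(2\pi\sqrt{-1}/7)$, let $e_0\colon[0,1]\to C$ be the path $e_0(t)=(t,\sqrt[7]{t(1-t)^2})$ (real nonnegative seventh root), let $\sigma\colon C\to C$ be the automorphism $\sigma(x,y)=(x,\zeta_7 y)$, and for $k=0,1,\dots,7$ let $\ell_k$ be the loop $\sigma^{k-1}_\ast(e_0)\cdot\sigma^{k}_\ast(e_0)^{-1}$ (first traverse $\sigma^{k-1}\circ e_0$, then $\sigma^k\circ e_0$ backwards). Let $\omega'_1=(1-x)\,dx/y^6$, $\omega'_2=(1-x)\,dx/y^5$, $\omega'_3=dx/y^3$, let $(h_1,h_2,h_3,h_4)=(1/7,2/7,4/7,1/7)$ and $\xi_i=\zeta_7^{7h_i}$. Then for $i=1,2,3$ and every $k$, $$\int_{\ell_k}\omega'_i=(\xi_i^{k-1}-\xi_i^{k})\,B(h_i,h_{i+1}),$$ where $B(u,v)=\int_0^1 t^{u-1}(1-t)^{v-1}\,dt$ is the beta function.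
   Context: The forms $\omega'_1,\omega'_2,\omega'_3$ form a basis of the holomorphic $1$-forms on the genus-$3$ curve $C$. Thus $\xi_1=\zeta_7$, $\xi_2=\zeta_7^2$, $\xi_3=\zeta_7^4$. *)

theory Defs
  imports "HOL-Analysis.Analysis"
begin

definition klein_affine :: "(complex \<times> complex) set" where
  "klein_affine = {(x, y). y ^ 7 = x * (1 - x)\<^sup>2}"

definition zeta7 :: complex where
  "zeta7 = exp (2 * of_real pi * \<i> / 7)"

definition e0 :: "real \<Rightarrow> complex \<times> complex" where
  "e0 t = (complex_of_real t, complex_of_real (root 7 (t * (1 - t)\<^sup>2)))"

definition sigma_pow :: "int \<Rightarrow> complex \<times> complex \<Rightarrow> complex \<times> complex" where
  "sigma_pow j p = (fst p, zeta7 powi j * snd p)"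

definition loop_l :: "int \<Rightarrow> real \<Rightarrow> complex \<times> complex" where
  "loop_l k = (sigma_pow (k - 1) \<circ> e0) +++ reversepath (sigma_pow k \<circ> e0)"

text \<open>The forms omega'_i = f_i(x,y) dx.\<close>
fun omega' :: "nat \<Rightarrow> complex \<Rightarrow> complex \<Rightarrow> complex" where
  "omega' (Suc 0) x y = (1 - x) / y ^ 6"
| "omega' (Suc (Suc 0)) x y = (1 - x) / y ^ 5"
| "omega' (Suc (Suc (Suc 0))) x y = 1 / y ^ 3"
| "omega' _ x y = 0"

text \<open>Integral of the 1-form f(x,y) dx along a path g : [0,1] -> C^2 has value I
  (Henstock-Kurzweil integral, which covers the improper integrals at the endpoints).\<close>
definition dx_form_integral :: "(complex \<Rightarrow> complex \<Rightarrow> complex) \<Rightarrow> (real \<Rightarrow> complex \<times> complex)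
    \<Rightarrow> complex \<Rightarrow> bool" where
  "dx_form_integral f g I \<longleftrightarrow>
     ((\<lambda>t. f (fst (g t)) (snd (g t)) * vector_derivative (\<lambda>s. fst (g s)) (at t within {0..1}))
        has_integral I) {0..1}"

fun hexp :: "nat \<Rightarrow> real" where
  "hexp (Suc 0) = 1/7"
| "hexp (Suc (Suc 0)) = 2/7"
| "hexp (Suc (Suc (Suc 0))) = 4/7"
| "hexp (Suc (Suc (Suc (Suc 0)))) = 1/7"
| "hexp _ = 0"

definition xi :: "nat \<Rightarrow> complex" where
  "xi i = zeta7 powr complex_of_real (7 * hexp i)"

end

theory Submission
  imports Defs
begin

lemma zeta7_pow7: "zeta7 ^ 7 = 1"
proof -
  have e: "of_nat 7 * (2 * of_real pi * \<i> / 7) = 2 * of_real pi * (\<i>::complex)" by simp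
  show ?thesis by (simp only: zeta7_def exp_of_nat_mult[symmetric] e exp_two_pi_i)
qed

lemma zeta7_nz: "zeta7 \<noteq> 0" unfolding zeta7_def by simp

lemma xi_vals: "xi 1 = zeta7" "xi 2 = zeta7 ^ 2" "xi 3 = zeta7 ^ 4"
proof -
  have "complex_of_real (7 * hexp 1) = 1" by (simp add: numeral_eq_Suc)
  then show "xi 1 = zeta7" unfolding xi_def using zeta7_nz by (simp add: powr_def)
  have "complex_of_real (7 * hexp 2) = 2" by (simp add: numeral_eq_Suc)
  then show "xi 2 = zeta7 ^ 2" unfolding xi_def by (simp add: powr_complexnumeral)
  have "complex_of_real (7 * hexp 3) = 4" by (simp add: numeral_eq_Suc)
  then show "xi 3 = zeta7 ^ 4" unfolding xi_def by (simp add: powr_complexnumeral)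
qed

definition phi :: "real \<Rightarrow> real \<Rightarrow> real \<Rightarrow> real" where
  "phi a b s = s powr (a - 1) * (1 - s) powr (b - 1)"

lemma real_part:
  fixes s :: real and n :: nat and a b :: real
  assumes "0 < s" "s < 1" and "a = 1 - real n / 7" and "b - 1 = real m - 2 * real n / 7"
  shows "phi a b s * (root 7 (s * (1 - s)^2)) ^ n = (1 - s) ^ m"
proof -
  have s1: "0 < 1 - s" using assms by simp
  have "root 7 (s * (1 - s)^2) = (s * (1 - s)^2) powr (1/7)"
    using assms s1 root_powr_inverse[of 7 "s*(1-s)^2"] by simp
  also have "\<dots> = s powr (1/7) * ((1 - s)^2) powr (1/7)"
    using assms s1 by (simp add: powr_mult)
  also have "((1 - s)^2) powr (1/7) = ((1 - s) powr 2) powr (1/7)"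
    using s1 by (simp add: powr_numeral)
  also have "\<dots> = (1 - s) powr (2/7)" by (simp add: powr_powr)
  finally have r: "root 7 (s * (1 - s)^2) = s powr (1/7) * (1 - s) powr (2/7)" by simp
  have a1: "(s powr (1/7)) ^ n = s powr (real n/7)"
    using assms by (simp add: powr_power)
  have a2: "((1 - s) powr (2/7)) ^ n = (1 - s) powr (2 * real n/7)"
    using s1 by (simp add: powr_power mult.commute)
  have rn: "(root 7 (s * (1 - s)^2)) ^ n = s powr (real n/7) * (1 - s) powr (2 * real n/7)"
    by (simp only: r power_mult_distrib a1 a2)
  have "phi a b s * (root 7 (s * (1 - s)^2)) ^ n
      = (s powr (a - 1) * s powr (real n/7)) * ((1 - s) powr (b - 1) * (1 - s) powr (2 * real n/7))"
    unfolding phi_def rn by (simp add: algebra_simps)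
  also have "\<dots> = s powr (a - 1 + real n/7) * (1 - s) powr (b - 1 + 2 * real n/7)"
    by (simp add: powr_add)
  also have "a - 1 + real n/7 = 0" using assms by simp
  also have "b - 1 + 2 * real n/7 = real m" using assms by simp
  also have "s powr 0 * (1 - s) powr real m = (1 - s) ^ m" using assms s1 by (simp add: powr_realpow)
  finally show ?thesis .
qed


find_theorems "((\<lambda>x. of_real (_ x)) has_vector_derivative _) _"

lemma pointwise:
  fixes s :: real and j :: int
  assumes "0 < s" "s < 1" "i \<in> {1,2,3}"
  shows "omega' i (of_real s) (zeta7 powi j * of_real (root 7 (s * (1 - s)^2)))
         = xi i powi j * of_real (phi (hexp i) (hexp (i + 1)) s)"
proof -
  define w where "w = zeta7 powi j"
  define r where "r = root 7 (s * (1 - s)^2)"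
  have w7: "w ^ 7 = 1" unfolding w_def
    by (metis power_int_power' power_int_power zeta7_pow7 power_int_1_left mult.commute)
  have wnz: "w \<noteq> 0" using w7 by auto
  have rpos: "r > 0" unfolding r_def using assms by simp
  have pw: "(zeta7 ^ m) powi j = w ^ m" for m :: nat
    unfolding w_def by (metis power_int_power' power_int_power mult.commute)
  consider "i = 1" | "i = 2" | "i = 3" using assms by auto
  then show ?thesis
  proof cases
    case 1
    have e: "phi (1/7) (2/7) s * r ^ 6 = (1 - s) ^ 1"
      unfolding r_def by (rule real_part) (use assms in auto)
    have "w * w ^ 6 = 1" using w7 by (simp add: power_Suc[symmetric] del: power_Suc)
    then have iw: "inverse (w ^ 6) = w" by (metis inverse_unique mult.commute)
    have "phi (1/7) (2/7) s = (1 - s) / r ^ 6" using e rpos by (simp add: field_simps)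
    then have e': "complex_of_real (phi (1/7) (2/7) s) = (1 - of_real s) / of_real r ^ 6" by simp
    have "omega' i (of_real s) (w * of_real r) = inverse (w^6) * ((1 - of_real s) / of_real r ^ 6)"
      using 1 by (simp add: power_mult_distrib divide_inverse)
    also have "\<dots> = w * of_real (phi (1/7) (2/7) s)" by (simp only: iw e')
    finally have calc: "omega' i (of_real s) (w * of_real r) = w * of_real (phi (1/7) (2/7) s)" .
    have h: "hexp i = 1/7" "hexp (i+1) = 2/7" using 1 by (simp_all add: numeral_eq_Suc)
    have x: "xi i powi j = w" unfolding 1 xi_vals(1) w_def by (rule refl)
    show ?thesis unfolding h x using calc unfolding w_def r_def .
  next
    case 2
    have e: "phi (2/7) (4/7) s * r ^ 5 = (1 - s) ^ 1"
      unfolding r_def by (rule real_part) (use assms in auto)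
    have "w^2 * w ^ 5 = 1" using w7 by (simp add: power_add[symmetric] del: power_Suc)
    then have iw: "inverse (w ^ 5) = w^2" by (metis inverse_unique mult.commute)
    have "phi (2/7) (4/7) s = (1 - s) / r ^ 5" using e rpos by (simp add: field_simps)
    then have e': "complex_of_real (phi (2/7) (4/7) s) = (1 - of_real s) / of_real r ^ 5" by simp
    have "omega' i (of_real s) (w * of_real r) = inverse (w^5) * ((1 - of_real s) / of_real r ^ 5)"
      using 2 by (simp add: power_mult_distrib divide_inverse numeral_eq_Suc)
    also have "\<dots> = w^2 * of_real (phi (2/7) (4/7) s)" by (simp only: iw e')
    finally have calc: "omega' i (of_real s) (w * of_real r) = w^2 * of_real (phi (2/7) (4/7) s)" .
    have h: "hexp i = 2/7" "hexp (i+1) = 4/7" using 2 by (simp_all add: numeral_eq_Suc)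
    have x: "xi i powi j = w^2" unfolding 2 xi_vals(2) by (rule pw)
    show ?thesis unfolding h x using calc unfolding w_def r_def .
  next
    case 3
    have e: "phi (4/7) (1/7) s * r ^ 3 = (1 - s) ^ 0"
      unfolding r_def by (rule real_part) (use assms in auto)
    have "w^4 * w ^ 3 = 1" using w7 by (simp add: power_add[symmetric] del: power_Suc)
    then have iw: "inverse (w ^ 3) = w^4" by (metis inverse_unique mult.commute)
    have "phi (4/7) (1/7) s = 1 / r ^ 3" using e rpos by (simp add: field_simps)
    then have e': "complex_of_real (phi (4/7) (1/7) s) = 1 / of_real r ^ 3" by simp
    have "omega' i (of_real s) (w * of_real r) = inverse (w^3) * (1 / of_real r ^ 3)"
      using 3 by (simp add: power_mult_distrib divide_inverse numeral_eq_Suc)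
    also have "\<dots> = w^4 * of_real (phi (4/7) (1/7) s)" by (simp only: iw e')
    finally have calc: "omega' i (of_real s) (w * of_real r) = w^4 * of_real (phi (4/7) (1/7) s)" .
    have h: "hexp i = 4/7" "hexp (i+1) = 1/7" using 3 by (simp_all add: numeral_eq_Suc)
    have x: "xi i powi j = w^4" unfolding 3 xi_vals(3) by (rule pw)
    show ?thesis unfolding h x using calc unfolding w_def r_def .
  qed
qed

lemma halves:
  fixes f :: "real \<Rightarrow> real"
  assumes "(f has_integral B) {0..1}"
  shows "((\<lambda>t. 2 * f (2*t)) has_integral B) {0..1/2}"
    and "((\<lambda>t. 2 * f (2 - 2*t)) has_integral B) {1/2..1}"
proof -
  have A: "(f has_integral B) (cbox 0 1)" using assms by simp
  have i1: "(\<lambda>x. (1 / 2) *\<^sub>R x + - ((1 / 2) *\<^sub>R 0)) ` cbox 0 (1::real) = {0..1/2}"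
    using image_affinity_atLeastAtMost[of "1/2" 0 0 "1::real"] by simp
  have "((\<lambda>x. f (2 *\<^sub>R x + 0)) has_integral (1 / (\<bar>2\<bar> ^ DIM(real))) *\<^sub>R B) {0..1/2}"
    using has_integral_affinity[OF A, of 2 0] unfolding i1 by simp
  then have "((\<lambda>x. f (2 * x)) has_integral B / 2) {0..1/2}" by simp
  from has_integral_mult_right[OF this, of 2] show "((\<lambda>t. 2 * f (2*t)) has_integral B) {0..1/2}" by simp
  have i2: "(\<lambda>x. (1 / -2) *\<^sub>R x + - ((1 / -2) *\<^sub>R 2)) ` cbox 0 (1::real) = {1/2..1}"
    using image_affinity_atLeastAtMost[of "-1/2" 1 0 "1::real"] by simp
  have "((\<lambda>x. f (-2 *\<^sub>R x + 2)) has_integral (1 / (\<bar>-2\<bar> ^ DIM(real))) *\<^sub>R B) {1/2..1}"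
    using has_integral_affinity[OF A, of "-2" 2] unfolding i2 by simp
  then have "((\<lambda>x. f (2 - 2 * x)) has_integral B / 2) {1/2..1}" by (simp add: algebra_simps)
  from has_integral_mult_right[OF this, of 2] show "((\<lambda>t. 2 * f (2 - 2*t)) has_integral B) {1/2..1}" by simp
qed


lemma fst_loop: "(\<lambda>s. fst (loop_l k s)) = (\<lambda>s. if s \<le> 1/2 then complex_of_real (2 * s) else complex_of_real (2 - 2 * s))"
  by (auto simp: fun_eq_iff loop_l_def joinpaths_def reversepath_def sigma_pow_def e0_def)

lemma fst_loop': "fst (loop_l k s) = (if s \<le> 1/2 then complex_of_real (2 * s) else complex_of_real (2 - 2 * s))"
  by (simp add: loop_l_def joinpaths_def reversepath_def sigma_pow_def e0_def)

lemma snd_loop1: "t \<le> 1/2 \<Longrightarrow> snd (loop_l k t) = zeta7 powi (k - 1) * of_real (root 7 ((2*t) * (1 - 2*t)^2))"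
  by (simp add: loop_l_def joinpaths_def reversepath_def sigma_pow_def e0_def)

lemma snd_loop2: "t > 1/2 \<Longrightarrow> snd (loop_l k t) = zeta7 powi k * of_real (root 7 ((2 - 2*t) * (1 - (2 - 2*t))^2))"
  by (simp add: loop_l_def joinpaths_def reversepath_def sigma_pow_def e0_def algebra_simps)

lemma vd1:
  assumes "0 < t" "t < 1/2"
  shows "vector_derivative (\<lambda>s. fst (loop_l k s)) (at t within {0..1}) = 2"
proof -
  have d: "((\<lambda>s. complex_of_real (2 * s)) has_vector_derivative of_real 2) (at t)"
    by (intro has_vector_derivative_of_real derivative_eq_intros) auto
  have "((\<lambda>s. fst (loop_l k s)) has_vector_derivative of_real 2) (at t)"
    by (rule has_vector_derivative_transform_within_open[OF d, of "{..<1/2}"]) (use assms in \<open>auto simp: fst_loop'\<close>)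
  then show ?thesis using assms by (subst vector_derivative_at_within_ivl) auto
qed

lemma vd2:
  assumes "1/2 < t" "t < 1"
  shows "vector_derivative (\<lambda>s. fst (loop_l k s)) (at t within {0..1}) = -2"
proof -
  have d: "((\<lambda>s. complex_of_real (2 - 2 * s)) has_vector_derivative of_real (-2)) (at t)"
    by (intro has_vector_derivative_of_real derivative_eq_intros) auto
  have "((\<lambda>s. fst (loop_l k s)) has_vector_derivative of_real (-2)) (at t)"
    by (rule has_vector_derivative_transform_within_open[OF d, of "{1/2<..}"]) (use assms in \<open>auto simp: fst_loop'\<close>)
  then show ?thesis using assms by (subst vector_derivative_at_within_ivl) auto
qed

theorem lemma4p1:
  fixes i :: nat and k :: int
  assumes "i \<in> {1, 2, 3}" and "0 \<le> k" and "k \<le> 7"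
  shows "dx_form_integral (omega' i) (loop_l k)
           ((xi i powi (k - 1) - xi i powi k) * complex_of_real (Beta (hexp i) (hexp (i + 1))))"
proof -
  define a where "a = hexp i"
  define b where "b = hexp (i + 1)"
  define f where "f = phi a b"
  have ab: "a > 0" "b > 0" using assms(1) by (auto simp: a_def b_def numeral_eq_Suc)
  have B: "(f has_integral Beta a b) {0..1}"
    unfolding f_def phi_def by (rule has_integral_Beta_real[OF ab])
  define c1 where "c1 = xi i powi (k - 1)"
  define c2 where "c2 = xi i powi k"
  define H1 where "H1 = (\<lambda>t. c1 * complex_of_real (2 * f (2*t)))"
  define H2 where "H2 = (\<lambda>t. - (c2 * complex_of_real (2 * f (2 - 2*t))))"
  have I1: "(H1 has_integral c1 * of_real (Beta a b)) {0..1/2}"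
    unfolding H1_def by (intro has_integral_mult_right has_integral_of_real halves(1)[OF B])
  have I2: "(H2 has_integral - (c2 * of_real (Beta a b))) {1/2..1}"
    unfolding H2_def by (intro has_integral_neg has_integral_mult_right has_integral_of_real halves(2)[OF B])
  define H where "H = (\<lambda>t. if t \<le> 1/2 then H1 t else H2 t)"
  have I1': "(H has_integral c1 * of_real (Beta a b)) {0..1/2}"
    by (rule has_integral_spike_finite[OF _ _ I1, of "{}"]) (auto simp: H_def)
  have I2': "(H has_integral - (c2 * of_real (Beta a b))) {1/2..1}"
    by (rule has_integral_spike_finite[OF _ _ I2, of "{1/2}"]) (auto simp: H_def)
  have IH: "(H has_integral (c1 - c2) * of_real (Beta a b)) {0..1}"
    using has_integral_combine[OF _ _ I1' I2'] by (simp add: algebra_simps)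
  let ?G = "\<lambda>t. omega' i (fst (loop_l k t)) (snd (loop_l k t)) * vector_derivative (\<lambda>s. fst (loop_l k s)) (at t within {0..1})"
  have GH: "?G t = H t" if t: "t \<in> {0..1} - {0, 1/2, 1}" for t
  proof (cases "t < 1/2")
    case True
    have t0: "0 < t" using t by auto
    have p: "omega' i (of_real (2*t)) (zeta7 powi (k - 1) * of_real (root 7 ((2*t) * (1 - 2*t)^2)))
        = c1 * of_real (f (2*t))"
      unfolding c1_def f_def a_def b_def by (rule pointwise) (use t0 True assms(1) in auto)
    show ?thesis unfolding vd1[OF t0 True] using True t0 p
      by (simp add: H_def H1_def snd_loop1 fst_loop')
  next
    case False
    then have t2: "1/2 < t" "t < 1" using t by auto
    have p: "omega' i (of_real (2 - 2*t)) (zeta7 powi k * of_real (root 7 ((2 - 2*t) * (1 - (2 - 2*t))^2)))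
        = c2 * of_real (f (2 - 2*t))"
      unfolding c2_def f_def a_def b_def by (rule pointwise) (use t2 assms(1) in auto)
    show ?thesis unfolding vd2[OF t2] using t2 p
      by (simp add: H_def H2_def snd_loop2 fst_loop')
  qed
  have "(?G has_integral (c1 - c2) * of_real (Beta a b)) {0..1}"
    by (rule has_integral_spike_finite[OF _ _ IH, of "{0, 1/2, 1}"]) (use GH in auto)
  then show ?thesis unfolding dx_form_integral_def c1_def c2_def a_def b_def .
qed

end
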